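(* As formal power series in $z$ with integer coefficients, $$\Psi^2(z)=\frac{1}{1+z}\sum_{s\ge0}\ \sum_{k_1>k_2>\dots>k_s\ge0}3^s\prod_{j=1}^{s}\frac{z^{3^{k_j}}\bigl(1+z^{3^{k_j}}\bigr)}{1+z^{3^{k_j+1}}},$$ where the term for $s=0$ is interpreted as $1$. In particular $\Psi^2(z)\equiv \frac{1}{1+z}$ modulo $3$ (coefficientwise).
   Context: $\Psi(z)=\prod_{j\ge0}\bigl(1+z^{3^j}\bigr)=\sum_{k\ge0}\sum_{n_1>\dots>n_k\ge0}z^{3^{n_1}+\dots+3^{n_k}}$, a formal power series with coefficients in $\{0,1\}$. Rational functions such as $1/(1+z)$ are expanded as power series in $z$. For integral power series $f,g$, "$f=g$ modulo $3^e$" means all coefficients of $f-g$ are divisible by $3^e$. *)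

theory Defs
  imports "HOL-Computational_Algebra.Formal_Power_Series" "HOL-Analysis.Infinite_Sum"
begin

definition Psi :: "int fps" where
  "Psi = Abs_fps (\<lambda>n. if \<exists>K::nat set. finite K \<and> n = (\<Sum>j\<in>K. 3 ^ j) then 1 else 0)"

text \<open>Power series expansion of the rational function 1/(1+z^m), m >= 1:
  sum over i of (-1)^i z^(m i).\<close>
definition inv_1_plus_Xpow :: "nat \<Rightarrow> int fps" where
  "inv_1_plus_Xpow m = Abs_fps (\<lambda>n. if m dvd n then (-1) ^ (n div m) else 0)"

definition fac :: "nat \<Rightarrow> int fps" where
  "fac k = fps_X ^ (3 ^ k) * (1 + fps_X ^ (3 ^ k)) * inv_1_plus_Xpow (3 ^ (k + 1))"

end

theory Submission
  imports Defs
begin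
unbundle fps_syntax

abbreviation inv1p where "inv1p \<equiv> inv_1_plus_Xpow"

lemma onepX_nth: "((1 + fps_X ^ a) * (f::int fps)) $ n = f $ n + (if a \<le> n then f $ (n - a) else 0)"
  by (simp add: distrib_right fps_X_power_mult_nth)

lemma inv_mult: assumes "a > 0" shows "(1 + fps_X ^ a) * inv1p a = 1"
proof (rule fps_ext)
  fix n
  show "((1 + fps_X ^ a) * inv1p a) $ n = (1::int fps) $ n"
  proof (cases "n = 0")
    case True then show ?thesis using assms by (simp add: onepX_nth inv_1_plus_Xpow_def)
  next
    case False
    show ?thesis
    proof (cases "a dvd n")
      case True
      then obtain q where q: "n = a * q" by blast
      with False have "q > 0" by auto
      then obtain r where r: "q = Suc r" using not0_implies_Suc by blast
      have "n - a = a * r" using q r by (simp add: algebra_simps)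
      moreover have "a \<le> n" using q r by simp
      ultimately show ?thesis using False assms q r
        by (simp add: onepX_nth inv_1_plus_Xpow_def)
    next
      case nd: False
      have "\<not> a dvd (n - a)" if "a \<le> n" using nd that
        by (metis dvd_add_right_iff le_add_diff_inverse2 dvd_refl)
      then show ?thesis using nd False by (simp add: onepX_nth inv_1_plus_Xpow_def)
    qed
  qed
qed

lemma inv_low: assumes "n < m" shows "inv1p m $ n = (if n = 0 then 1 else 0)"
  using assms by (auto simp: inv_1_plus_Xpow_def dest: dvd_imp_le)

lemma mult_inv_low: assumes "n < m" shows "((g::int fps) * inv1p m) $ n = g $ n"
proof -
  have "((g::int fps) * inv1p m) $ n = (\<Sum>i=0..n. if i = n then g$i else 0)"
    unfolding fps_mult_nth
    by (rule sum.cong) (use assms in \<open>auto simp: inv_low\<close>)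
  also have "\<dots> = g $ n" by simp
  finally show ?thesis .
qed

lemma mult_agree: assumes "\<And>i. i \<le> n \<Longrightarrow> f $ i = g $ i"
  shows "((f::int fps) * h) $ n = (g * h) $ n"
  unfolding fps_mult_nth by (rule sum.cong) (use assms in auto)

lemma fac_step: "1 + 3 * fac k = (1 + fps_X ^ (3^k)) ^ 3 * inv1p (3 ^ (k+1))"
proof -
  let ?y = "fps_X ^ (3^k) :: int fps"
  have e: "fps_X ^ (3^(k+1)) = ?y ^ 3" by (simp add: power_mult[symmetric] mult.commute)
  have i: "(1 + ?y^3) * inv1p (3^(k+1)) = 1" using inv_mult[of "3^(k+1)"] e by simp
  have "(1 + ?y) ^ 3 * inv1p (3 ^ (k+1)) = ((1 + ?y^3) + 3 * ?y * (1 + ?y)) * inv1p (3 ^ (k+1))"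
    by (simp add: power3_eq_cube algebra_simps)
  also have "\<dots> = 1 + 3 * fac k" using i unfolding fac_def by (simp add: algebra_simps)
  finally show ?thesis by simp
qed

definition PsiN :: "nat \<Rightarrow> int fps" where "PsiN N = (\<Prod>k<N. 1 + fps_X ^ (3^k))"

lemma prod_form: "(\<Prod>k<N. 1 + 3 * fac k) = (1 + fps_X) * PsiN N ^ 2 * inv1p (3^N)"
proof (induction N)
  case 0 then show ?case using inv_mult[of 1] by (simp add: PsiN_def)
next
  case (Suc N)
  have i: "(1 + fps_X ^ (3^N)) * inv1p (3^N) = (1::int fps)" by (rule inv_mult) simp
  have "(\<Prod>k<Suc N. 1 + 3 * fac k) = (1 + fps_X) * PsiN N ^ 2 * inv1p (3^N) * ((1 + fps_X ^ (3^N)) ^ 3 * inv1p (3 ^ (N+1)))"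
    using Suc by (simp add: fac_step)
  also have "\<dots> = (1 + fps_X) * (PsiN N * (1 + fps_X ^ (3^N))) ^ 2 * inv1p (3 ^ (N+1)) * ((1 + fps_X ^ (3^N)) * inv1p (3^N))"
    by (simp add: power3_eq_cube power2_eq_square algebra_simps)
  also have "\<dots> = (1 + fps_X) * PsiN (Suc N) ^ 2 * inv1p (3 ^ Suc N)"
    using i by (simp add: PsiN_def)
  finally show ?case .
qed

definition AN :: "nat \<Rightarrow> nat \<Rightarrow> bool" where
  "AN N m = (\<exists>K \<subseteq> {..<N}. m = (\<Sum>k\<in>K. 3 ^ k))"

lemma geom3: "2 * (\<Sum>k<N. (3::nat) ^ k) + 1 = 3 ^ N"
  by (induction N) auto

lemma sum_lt: assumes "K \<subseteq> {..<N}" shows "(\<Sum>k\<in>K. (3::nat) ^ k) < 3 ^ N"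
proof -
  have "(\<Sum>k\<in>K. (3::nat) ^ k) \<le> (\<Sum>k<N. 3 ^ k)"
    by (rule sum_mono2) (use assms in auto)
  then show ?thesis using geom3[of N] by linarith
qed

lemma AN_Suc: "AN (Suc N) m \<longleftrightarrow> AN N m \<or> (3^N \<le> m \<and> AN N (m - 3^N))"
proof
  assume "AN (Suc N) m"
  then obtain K where K: "K \<subseteq> {..<Suc N}" "m = (\<Sum>k\<in>K. 3 ^ k)" unfolding AN_def by blast
  show "AN N m \<or> (3^N \<le> m \<and> AN N (m - 3^N))"
  proof (cases "N \<in> K")
    case True
    have fin: "finite K" by (rule finite_subset[OF K(1)]) simp
    have "m = 3^N + (\<Sum>k\<in>K-{N}. 3 ^ k)" using K(2) True fin by (simp add: sum.remove)
    moreover have "K - {N} \<subseteq> {..<N}" using K(1) by auto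
    ultimately have "AN N (m - 3^N)" "3^N \<le> m" unfolding AN_def by auto
    then show ?thesis by blast
  next
    case False
    have "K \<subseteq> {..<N}" 
    proof
      fix x assume x: "x \<in> K"
      have "x < Suc N" using K(1) x by auto
      moreover have "x \<noteq> N" using False x by auto
      ultimately show "x \<in> {..<N}" by simp
    qed
    then show ?thesis using K(2) unfolding AN_def by blast
  qed
next
  assume "AN N m \<or> (3^N \<le> m \<and> AN N (m - 3^N))"
  then show "AN (Suc N) m"
  proof
    assume "AN N m"
    then obtain K where K: "K \<subseteq> {..<N}" "m = (\<Sum>k\<in>K. 3 ^ k)" unfolding AN_def by blast
    have "K \<subseteq> {..<Suc N}" using K(1) by auto
    then show ?thesis using K(2) unfolding AN_def by blast
  next
    assume a: "3^N \<le> m \<and> AN N (m - 3^N)"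
    then obtain K where K: "K \<subseteq> {..<N}" "m - 3^N = (\<Sum>k\<in>K. 3 ^ k)" unfolding AN_def by blast
    have fin: "finite K" by (rule finite_subset[OF K(1)]) simp
    have nK: "N \<notin> K" using K(1) by auto
    have "(\<Sum>k\<in>insert N K. (3::nat) ^ k) = 3^N + (\<Sum>k\<in>K. 3 ^ k)" using fin nK by simp
    also have "\<dots> = m" using K(2) a by linarith
    finally show ?thesis unfolding AN_def using K(1)
      by (intro exI[of _ "insert N K"]) auto
  qed
qed

lemma PsiN_Suc: "PsiN (Suc N) = (1 + fps_X ^ (3^N)) * PsiN N"
  by (simp add: PsiN_def mult.commute)

lemma PsiN_nth: "PsiN N $ m = (if AN N m then 1 else 0)"
proof (induction N arbitrary: m)
  case 0 then show ?case by (simp add: PsiN_def AN_def)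
next
  case (Suc N)
  have lt: "AN N j \<Longrightarrow> j < 3^N" for j unfolding AN_def using sum_lt by blast
  show ?case unfolding PsiN_Suc onepX_nth Suc AN_Suc[of N m]
    using lt[of m] by auto
qed

lemma Psi_eq: assumes "m < 3 ^ N" shows "Psi $ m = PsiN N $ m"
proof -
  have "(\<exists>K::nat set. finite K \<and> m = (\<Sum>j\<in>K. 3 ^ j)) \<longleftrightarrow> AN N m"
  proof
    assume "\<exists>K::nat set. finite K \<and> m = (\<Sum>j\<in>K. 3 ^ j)"
    then obtain K :: "nat set" where K: "finite K" "m = (\<Sum>j\<in>K. 3 ^ j)" by blast
    have "K \<subseteq> {..<N}"
    proof
      fix k assume "k \<in> K"
      then have "(3::nat) ^ k \<le> m" using K by (metis member_le_sum zero_le)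
      then have "(3::nat) ^ k < 3 ^ N" using assms by linarith
      then show "k \<in> {..<N}" using power_less_imp_less_exp by fastforce
    qed
    then show "AN N m" using K unfolding AN_def by blast
  next
    assume "AN N m"
    then obtain K where K: "K \<subseteq> {..<N}" "m = (\<Sum>k\<in>K. 3 ^ k)" unfolding AN_def by blast
    have "finite K" using K(1) by (rule finite_subset) simp
    then show "\<exists>K::nat set. finite K \<and> m = (\<Sum>j\<in>K. 3 ^ j)" using K(2) by blast
  qed
  then show ?thesis by (simp add: Psi_def PsiN_nth)
qed

definition trm :: "nat set \<Rightarrow> int fps" where "trm K = 3 ^ card K * (\<Prod>k\<in>K. fac k)"

definition S :: "nat \<Rightarrow> int fps" where "S N = (\<Sum>K\<in>Pow {..<N}. trm K)"

lemma S_prod: "S N = (\<Prod>k<N. 1 + 3 * fac k)"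
proof -
  have "(\<Prod>k<N. 1 + 3 * fac k) = (\<Prod>k<N. 3 * fac k + 1)" by (simp add: add.commute)
  also have "\<dots> = (\<Sum>X\<in>Pow {..<N}. (\<Prod>k\<in>X. 3 * fac k) * (\<Prod>k\<in>{..<N}-X. 1))"
    by (rule prod_add) simp
  also have "\<dots> = S N" unfolding S_def trm_def
    by (rule sum.cong) (auto simp: prod.distrib)
  finally show ?thesis by simp
qed

lemma trm_zero: assumes "finite K" "k \<in> K" "j < 3 ^ k" shows "trm K $ j = 0"
proof -
  have "trm K = fps_X ^ (3^k) * (3 ^ card K * ((1 + fps_X ^ (3 ^ k)) * inv1p (3 ^ (k + 1))) * (\<Prod>k\<in>K-{k}. fac k))"
    unfolding trm_def using assms by (simp add: prod.remove fac_def algebra_simps)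
  then show ?thesis using assms by (simp add: fps_X_power_mult_nth)
qed

lemma trm_zero': assumes "finite K" "\<not> K \<subseteq> {..j}" shows "trm K $ j = 0"
proof -
  from assms(2) obtain k where "k \<in> K" "\<not> k \<le> j" by auto
  then have k: "k \<in> K" "j < k" by auto
  have "k < 2 ^ k" by (rule less_exp)
  also have "(2::nat) ^ k \<le> 3 ^ k" by (rule power_mono) auto
  finally show ?thesis using trm_zero[OF assms(1) k(1)] k by simp
qed

lemma sum_agree: assumes "finite F" "Pow {..j} \<subseteq> F" "\<forall>K\<in>F. finite K"
  shows "(sum trm F) $ j = (sum trm (Pow {..j})) $ j"
  unfolding fps_sum_nth
  by (rule sum.mono_neutral_right) (use assms trm_zero' in auto)

definition T :: "int fps" where "T = Abs_fps (\<lambda>j. S (Suc j) $ j)"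

lemma T_nth: assumes "j < N" shows "T $ j = S N $ j"
proof -
  have a: "S M $ j = (sum trm (Pow {..j})) $ j" if "j < M" for M
    unfolding S_def
    by (rule sum_agree) (use that in \<open>auto intro: finite_subset\<close>)
  show ?thesis using a[of "Suc j"] a[OF assms] by (simp add: T_def)
qed

lemma T_has_sum: "(trm has_sum T) {K :: nat set. finite K}"
  unfolding has_sum_def
proof (rule tendsto_fpsI)
  fix j
  show "\<forall>\<^sub>F x in finite_subsets_at_top {K. finite K}. sum trm x $ j = T $ j"
    unfolding eventually_finite_subsets_at_top
  proof (intro exI[of _ "Pow {..j}"] conjI allI impI)
    fix Y assume Y: "finite Y \<and> Pow {..j} \<subseteq> Y \<and> Y \<subseteq> {K. finite K}"
    have "sum trm Y $ j = (sum trm (Pow {..j})) $ j" by (rule sum_agree) (use Y in auto)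
    also have "\<dots> = S (Suc j) $ j" by (simp add: S_def lessThan_Suc_atMost)
    also have "\<dots> = T $ j" using T_nth[of j "Suc j"] by simp
    finally show "sum trm Y $ j = T $ j" .
  qed (auto intro: finite_subset)
qed

lemma T_eq: "T = (1 + fps_X) * Psi ^ 2"
proof (rule fps_ext)
  fix j
  define N where "N = Suc j"
  have j1: "Suc j < 2 ^ Suc j" by (rule less_exp)
  have j2: "(2::nat) ^ Suc j \<le> 3 ^ Suc j" by (rule power_mono) auto
  have jN: "j < 3 ^ N" unfolding N_def using j1 j2 by linarith
  have pe: "PsiN N $ i = Psi $ i" if "i \<le> j" for i
  proof -
    have "i < 3 ^ N" using jN that by linarith
    then show ?thesis by (simp add: Psi_eq)
  qed
  have "T $ j = S N $ j" using T_nth[of j N] by (simp add: N_def)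
  also have "\<dots> = ((1 + fps_X) * PsiN N ^ 2) $ j" using jN by (simp add: S_prod prod_form mult_inv_low)
  also have "\<dots> = (PsiN N * (PsiN N * (1 + fps_X))) $ j" by (simp add: power2_eq_square algebra_simps)
  also have "\<dots> = (Psi * (PsiN N * (1 + fps_X))) $ j"
    by (rule mult_agree) (rule pe)
  also have "\<dots> = (PsiN N * (Psi * (1 + fps_X))) $ j" by (subst mult.left_commute) (rule refl)
  also have "\<dots> = (Psi * (Psi * (1 + fps_X))) $ j"
    by (rule mult_agree) (rule pe)
  also have "\<dots> = ((1 + fps_X) * Psi ^ 2) $ j" by (simp add: power2_eq_square algebra_simps)
  finally show "T $ j = ((1 + fps_X) * Psi ^ 2) $ j" .
qed

lemma prod_mod3: "\<exists>R. (\<Prod>k<N. 1 + 3 * fac k) = 1 + 3 * R"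
proof (induction N)
  case 0 then show ?case by (intro exI[of _ 0]) simp
next
  case (Suc N)
  then obtain R where R: "(\<Prod>k<N. 1 + 3 * fac k) = 1 + 3 * R" by blast
  show ?case
  proof (intro exI[of _ "R + fac N + 3 * R * fac N"])
    have "(1 + 3 * R) * (1 + 3 * fac N) = 1 + 3 * (R + fac N + 3 * R * fac N)"
      by (simp add: algebra_simps)
    then show "(\<Prod>k<Suc N. 1 + 3 * fac k) = 1 + 3 * (R + fac N + 3 * R * fac N)"
      by (simp only: prod.lessThan_Suc R)
  qed
qed

lemma T_mod3: "\<exists>R'. T = 1 + fps_const 3 * R'"
proof -
  have "\<exists>r. T $ j = (1::int fps) $ j + 3 * r" for j
  proof -
    obtain R where R: "S (Suc j) = 1 + 3 * R" using prod_mod3 S_prod by metis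
    have "T $ j = (1 + fps_const 3 * R) $ j" using T_nth[of j "Suc j"] R
      by (simp add: numeral_fps_const)
    then show ?thesis by simp
  qed
  then obtain r where r: "\<And>j. T $ j = (1::int fps) $ j + 3 * r j" by metis
  show ?thesis by (intro exI[of _ "Abs_fps r"] fps_ext) (simp add: r)
qed

theorem lemma2p1:
  shows "\<exists>T :: int fps.
           ((\<lambda>K. 3 ^ card K * (\<Prod>k\<in>K. fac k)) has_sum T) {K :: nat set. finite K}
         \<and> Psi ^ 2 = inv_1_plus_Xpow 1 * T
         \<and> (\<forall>n. fps_nth (Psi ^ 2) n mod 3 = fps_nth (inv_1_plus_Xpow 1) n mod 3)"
proof (intro exI[of _ T] conjI allI)
  show "((\<lambda>K. 3 ^ card K * (\<Prod>k\<in>K. fac k)) has_sum T) {K :: nat set. finite K}"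
    using T_has_sum unfolding trm_def .
  have i: "(1 + fps_X) * inv1p 1 = 1" using inv_mult[of 1] by simp
  show e: "Psi ^ 2 = inv_1_plus_Xpow 1 * T"
  proof -
    have "inv1p 1 * ((1 + fps_X) * Psi ^ 2) = ((1 + fps_X) * inv1p 1) * Psi ^ 2"
      by (simp only: mult.assoc mult.left_commute[of "inv1p 1" "1 + fps_X"])
    also have "\<dots> = Psi ^ 2" by (simp only: i mult_1)
    finally show ?thesis unfolding T_eq by (rule sym)
  qed
  fix n
  obtain R' where R': "T = 1 + fps_const 3 * R'" using T_mod3 by blast
  have "Psi ^ 2 = inv1p 1 + fps_const 3 * (inv1p 1 * R')"
    unfolding e R' by (simp add: algebra_simps)
  then show "fps_nth (Psi ^ 2) n mod 3 = fps_nth (inv_1_plus_Xpow 1) n mod 3" by simp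
qed

end
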